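(* Let $X:\Omega\to\mathbb{R}^3$ be a timelike minimal surface in $\mathbb{L}^3$ which is a smooth graph over a timelike plane $P$ (through the origin). Let $\{b_2,b_3\}$ be a basis of $P$ orthonormal with respect to $\langle\cdot,\cdot\rangle$, with $b_2$ spacelike and $b_3$ timelike, and let $b_1=N$ be the unit spacelike normal of $P$, so that $\{b_1,b_2,b_3\}$ is an orthonormal basis of $\mathbb{L}^3$. Writing the surface, via the inverse of the (diffeomorphic) orthogonal projection onto $P$, as $X(x_2,x_3)$ over points $x_2b_2+x_3b_3$ of $P$, define $\psi(x_2,x_3)=\langle X(x_2,x_3),N\rangle$, so that $X(x_2,x_3)=\psi(x_2,x_3)N+x_2b_2+x_3b_3$. Then $\psi$ satisfies the Born-Infeld equation in the variables $x_2,x_3$, i.e. $\psi$ is a Born-Infeld soliton.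
   Context: $\mathbb{L}^3$ denotes $\mathbb{R}^3$ with the metric $\langle\cdot,\cdot\rangle$ given by $ds^2=dx^2+dy^2-dz^2$. A surface is timelike if its induced metric is Lorentzian, minimal if its mean curvature vanishes. A function $\psi$ on an open set of the $(u,v)$-plane is a Born-Infeld soliton (in the variables $u,v$) if $(1-\psi_v^2)\psi_{uu}+2\psi_u\psi_v\psi_{uv}-(1+\psi_u^2)\psi_{vv}=0$. *)

theory Defs
  imports "HOL-Analysis.Analysis"
begin

definition linner :: "real^3 \<Rightarrow> real^3 \<Rightarrow> real" where
  "linner x y = x$1 * y$1 + x$2 * y$2 - x$3 * y$3"

text \<open>Lorentzian cross product: orthogonal (w.r.t. linner) to both arguments.\<close>
definition lcross :: "real^3 \<Rightarrow> real^3 \<Rightarrow> real^3" where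
  "lcross a b = vector [a$2 * b$3 - a$3 * b$2, a$3 * b$1 - a$1 * b$3, -(a$1 * b$2 - a$2 * b$1)]"

definition pd :: "bool \<Rightarrow> (real \<times> real \<Rightarrow> 'a::real_normed_vector) \<Rightarrow> real \<times> real \<Rightarrow> 'a" where
  "pd d f p = (if d then vector_derivative (\<lambda>t. f (t, snd p)) (at (fst p))
                    else vector_derivative (\<lambda>t. f (fst p, t)) (at (snd p)))"

fun iter_pd :: "bool list \<Rightarrow> (real \<times> real \<Rightarrow> 'a::real_normed_vector) \<Rightarrow> real \<times> real \<Rightarrow> 'a" where
  "iter_pd [] f = f"
| "iter_pd (d # ds) f = pd d (iter_pd ds f)"

definition smooth_on2 :: "(real \<times> real) set \<Rightarrow> (real \<times> real \<Rightarrow> 'a::real_normed_vector) \<Rightarrow> bool" where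
  "smooth_on2 U f \<longleftrightarrow> (\<forall>ds. \<forall>p\<in>U. iter_pd ds f differentiable (at p))"

definition fundE :: "(real \<times> real \<Rightarrow> real^3) \<Rightarrow> real \<times> real \<Rightarrow> real" where
  "fundE X p = linner (pd True X p) (pd True X p)"
definition fundF :: "(real \<times> real \<Rightarrow> real^3) \<Rightarrow> real \<times> real \<Rightarrow> real" where
  "fundF X p = linner (pd True X p) (pd False X p)"
definition fundG :: "(real \<times> real \<Rightarrow> real^3) \<Rightarrow> real \<times> real \<Rightarrow> real" where
  "fundG X p = linner (pd False X p) (pd False X p)"

definition timelike_surface :: "(real \<times> real) set \<Rightarrow> (real \<times> real \<Rightarrow> real^3) \<Rightarrow> bool" where
  "timelike_surface U X \<longleftrightarrow> (\<forall>p\<in>U. fundE X p * fundG X p - (fundF X p)^2 < 0)"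

definition unit_normal :: "(real \<times> real \<Rightarrow> real^3) \<Rightarrow> real \<times> real \<Rightarrow> real^3" where
  "unit_normal X p = (let n = lcross (pd True X p) (pd False X p)
                      in (1 / sqrt \<bar>linner n n\<bar>) *\<^sub>R n)"

definition mean_curvature :: "(real \<times> real \<Rightarrow> real^3) \<Rightarrow> real \<times> real \<Rightarrow> real" where
  "mean_curvature X p =
     (let n = unit_normal X p;
          e = linner (pd True (pd True X) p) n;
          f = linner (pd True (pd False X) p) n;
          g = linner (pd False (pd False X) p) n;
          E = fundE X p; F = fundF X p; G = fundG X p
      in linner n n * (e * G - 2 * f * F + g * E) / (2 * (E * G - F^2)))"

definition minimal_surface :: "(real \<times> real) set \<Rightarrow> (real \<times> real \<Rightarrow> real^3) \<Rightarrow> bool" where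
  "minimal_surface U X \<longleftrightarrow> (\<forall>p\<in>U. mean_curvature X p = 0)"

definition born_infeld_soliton :: "(real \<times> real) set \<Rightarrow> (real \<times> real \<Rightarrow> real) \<Rightarrow> bool" where
  "born_infeld_soliton U \<psi> \<longleftrightarrow>
     (\<forall>p\<in>U. (1 - (pd False \<psi> p)^2) * pd True (pd True \<psi>) p
              + 2 * pd True \<psi> p * pd False \<psi> p * pd True (pd False \<psi>) p
              - (1 + (pd True \<psi> p)^2) * pd False (pd False \<psi>) p = 0)"

end

theory Submission
  imports Defs
begin

lemma pd_hvd:
  fixes f :: "real \<times> real \<Rightarrow> 'a::real_normed_vector"
  assumes "f differentiable (at p)"
  shows "((\<lambda>t. f (t, snd p)) has_vector_derivative pd True f p) (at (fst p))"
    and "((\<lambda>t. f (fst p, t)) has_vector_derivative pd False f p) (at (snd p))"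
proof -
  obtain f' where f': "(f has_derivative f') (at p)" using assms unfolding differentiable_def by blast
  have lin: "linear f'" using f' has_derivative_linear by blast
  have h1: "((\<lambda>t. (t, snd p)) has_derivative (\<lambda>h. (h, 0))) (at (fst p))"
    by (auto intro!: derivative_eq_intros)
  have h2: "((\<lambda>t. (fst p, t)) has_derivative (\<lambda>h. (0, h))) (at (snd p))"
    by (auto intro!: derivative_eq_intros)
  have c1: "((\<lambda>t. f (t, snd p)) has_derivative (\<lambda>h. f' (h, 0))) (at (fst p))"
    using has_derivative_compose[OF h1, of f f'] f' by (simp add: o_def)
  have c2: "((\<lambda>t. f (fst p, t)) has_derivative (\<lambda>h. f' (0, h))) (at (snd p))"
    using has_derivative_compose[OF h2, of f f'] f' by (simp add: o_def)
  have e1: "(\<lambda>h. f' (h, 0)) = (\<lambda>h. h *\<^sub>R f' (1, 0))"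
  proof
    fix h :: real show "f' (h, 0) = h *\<^sub>R f' (1, 0)"
      using linear_cmul[OF lin, of h "(1,0)"] by simp
  qed
  have e2: "(\<lambda>h. f' (0, h)) = (\<lambda>h. h *\<^sub>R f' (0, 1))"
  proof
    fix h :: real show "f' (0, h) = h *\<^sub>R f' (0, 1)"
      using linear_cmul[OF lin, of h "(0,1)"] by simp
  qed
  have v1: "((\<lambda>t. f (t, snd p)) has_vector_derivative f' (1,0)) (at (fst p))"
    using c1 e1 by (simp add: has_vector_derivative_def)
  have v2: "((\<lambda>t. f (fst p, t)) has_vector_derivative f' (0,1)) (at (snd p))"
    using c2 e2 by (simp add: has_vector_derivative_def)
  show "((\<lambda>t. f (t, snd p)) has_vector_derivative pd True f p) (at (fst p))"
    using v1 by (simp add: pd_def vector_derivative_at)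
  show "((\<lambda>t. f (fst p, t)) has_vector_derivative pd False f p) (at (snd p))"
    using v2 by (simp add: pd_def vector_derivative_at)
qed

lemma pd_lin:
  fixes g :: "real \<times> real \<Rightarrow> real"
  assumes "g differentiable (at p)"
  shows "pd d (\<lambda>q. g q *\<^sub>R N + fst q *\<^sub>R A + snd q *\<^sub>R B) p = pd d g p *\<^sub>R N + (if d then A else B)"
proof (cases d)
  case True
  have "((\<lambda>t. g (t, snd p) *\<^sub>R N + t *\<^sub>R A + snd p *\<^sub>R B) has_vector_derivative (pd True g p *\<^sub>R N + A)) (at (fst p))"
    using pd_hvd(1)[OF assms] by (auto intro!: derivative_eq_intros simp: has_real_derivative_iff_has_vector_derivative[symmetric])
  then show ?thesis using True by (simp add: pd_def vector_derivative_at)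
next
  case False
  have "((\<lambda>t. g (fst p, t) *\<^sub>R N + fst p *\<^sub>R A + t *\<^sub>R B) has_vector_derivative (pd False g p *\<^sub>R N + B)) (at (snd p))"
    using pd_hvd(2)[OF assms] by (auto intro!: derivative_eq_intros simp: has_real_derivative_iff_has_vector_derivative[symmetric])
  then show ?thesis using False by (simp add: pd_def vector_derivative_at)
qed

lemma pd_const:
  fixes g :: "real \<times> real \<Rightarrow> real"
  assumes "g differentiable (at p)"
  shows "pd d (\<lambda>q. g q *\<^sub>R N + C) p = pd d g p *\<^sub>R N"
proof (cases d)
  case True
  have "((\<lambda>t. g (t, snd p) *\<^sub>R N + C) has_vector_derivative (pd True g p *\<^sub>R N)) (at (fst p))"
    using pd_hvd(1)[OF assms] by (auto intro!: derivative_eq_intros simp: has_real_derivative_iff_has_vector_derivative[symmetric])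
  then show ?thesis using True by (simp add: pd_def vector_derivative_at)
next
  case False
  have "((\<lambda>t. g (fst p, t) *\<^sub>R N + C) has_vector_derivative (pd False g p *\<^sub>R N)) (at (snd p))"
    using pd_hvd(2)[OF assms] by (auto intro!: derivative_eq_intros simp: has_real_derivative_iff_has_vector_derivative[symmetric])
  then show ?thesis using False by (simp add: pd_def vector_derivative_at)
qed

lemma vd_local:
  assumes "open S" "x \<in> S" "\<And>y. y \<in> S \<Longrightarrow> f y = g y"
  shows "vector_derivative f (at x) = vector_derivative g (at x)"
proof -
  have "\<And>D. (f has_vector_derivative D) (at x) \<longleftrightarrow> (g has_vector_derivative D) (at x)"
    using has_vector_derivative_transform_within_open assms by metis
  then show ?thesis unfolding vector_derivative_def by simp
qed

lemma pd_local:
  assumes "open U" "p \<in> U" "\<And>q. q \<in> U \<Longrightarrow> f q = g q"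
  shows "pd d f p = pd d g p"
proof (cases d)
  case True
  have o: "open {t. (t, snd p) \<in> U}"
  proof -
    have "continuous_on UNIV (\<lambda>t. (t, snd p))" by (intro continuous_intros)
    then show ?thesis using continuous_open_preimage[of UNIV "\<lambda>t. (t, snd p)" U] assms(1) by (simp add: vimage_def)
  qed
  have "vector_derivative (\<lambda>t. f (t, snd p)) (at (fst p)) = vector_derivative (\<lambda>t. g (t, snd p)) (at (fst p))"
    by (rule vd_local[OF o]) (use assms in auto)
  then show ?thesis using True by (simp add: pd_def)
next
  case False
  have o: "open {t. (fst p, t) \<in> U}"
  proof -
    have "continuous_on UNIV (\<lambda>t. (fst p, t))" by (intro continuous_intros)
    then show ?thesis using continuous_open_preimage[of UNIV "\<lambda>t. (fst p, t)" U] assms(1) by (simp add: vimage_def)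
  qed
  have "vector_derivative (\<lambda>t. f (fst p, t)) (at (snd p)) = vector_derivative (\<lambda>t. g (fst p, t)) (at (snd p))"
    by (rule vd_local[OF o]) (use assms in auto)
  then show ?thesis using False by (simp add: pd_def)
qed

lemma linner_add1: "linner (x + y) z = linner x z + linner y z"
  by (simp add: linner_def algebra_simps)
lemma linner_add2: "linner z (x + y) = linner z x + linner z y"
  by (simp add: linner_def algebra_simps)
lemma linner_scale1: "linner (a *\<^sub>R x) y = a * linner x y"
  by (simp add: linner_def algebra_simps)
lemma linner_scale2: "linner y (a *\<^sub>R x) = a * linner y x"
  by (simp add: linner_def algebra_simps)
lemma linner_sym: "linner x y = linner y x"
  by (simp add: linner_def algebra_simps)

lemma lcross_comp: "lcross a b $ 1 = a$2 * b$3 - a$3 * b$2"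
  "lcross a b $ 2 = a$3 * b$1 - a$1 * b$3" "lcross a b $ 3 = -(a$1 * b$2 - a$2 * b$1)"
  by (simp_all add: lcross_def)

lemma lcross_norm: "linner (lcross x y) (lcross x y) = -(linner x x * linner y y - (linner x y)^2)"
  by (simp add: linner_def lcross_comp power2_eq_square) algebra

lemma det_shift: "linner x (lcross (a *\<^sub>R x + y) (b *\<^sub>R x + z)) = linner x (lcross y z)"
  by (simp add: linner_def lcross_comp) algebra

lemma gram: "0 - (linner x (lcross y z))^2 =
   linner x x * (linner y y * linner z z - linner y z * linner y z)
 - linner x y * (linner x y * linner z z - linner y z * linner x z)
 + linner x z * (linner x y * linner y z - linner y y * linner x z)"
  by (simp add: linner_def lcross_comp power2_eq_square) algebra

theorem lemma3p1:
  fixes U :: "(real \<times> real) set" and \<psi> :: "real \<times> real \<Rightarrow> real"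
    and N b2 b3 :: "real^3"
  assumes "open U"
    and "smooth_on2 U \<psi>"
    and "linner N N = 1" and "linner b2 b2 = 1" and "linner b3 b3 = -1"
    and "linner N b2 = 0" and "linner N b3 = 0" and "linner b2 b3 = 0"
    and "timelike_surface U (\<lambda>(x2, x3). \<psi> (x2, x3) *\<^sub>R N + x2 *\<^sub>R b2 + x3 *\<^sub>R b3)"
    and "minimal_surface U (\<lambda>(x2, x3). \<psi> (x2, x3) *\<^sub>R N + x2 *\<^sub>R b2 + x3 *\<^sub>R b3)"
  shows "born_infeld_soliton U \<psi>"
proof -
  define X where "X = (\<lambda>q. \<psi> q *\<^sub>R N + fst q *\<^sub>R b2 + snd q *\<^sub>R b3)"
  have Xeq: "(\<lambda>(x2, x3). \<psi> (x2, x3) *\<^sub>R N + x2 *\<^sub>R b2 + x3 *\<^sub>R b3) = X"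
    by (auto simp: X_def)
  have tl: "timelike_surface U X" and mn: "minimal_surface U X" using assms(9,10) Xeq by simp_all
  have diff: "\<And>ds q. q \<in> U \<Longrightarrow> iter_pd ds \<psi> differentiable (at q)"
    using assms(2) unfolding smooth_on2_def by blast
  have d0: "\<And>q. q \<in> U \<Longrightarrow> \<psi> differentiable (at q)" using diff[of _ "[]"] by simp
  have dT: "\<And>q. q \<in> U \<Longrightarrow> pd True \<psi> differentiable (at q)" using diff[of _ "[True]"] by simp
  have dF: "\<And>q. q \<in> U \<Longrightarrow> pd False \<psi> differentiable (at q)" using diff[of _ "[False]"] by simp
  have X1: "\<And>d q. q \<in> U \<Longrightarrow> pd d X q = pd d \<psi> q *\<^sub>R N + (if d then b2 else b3)"
    unfolding X_def by (rule pd_lin[OF d0])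
  have D0: "linner N (lcross b2 b3) \<noteq> 0"
  proof
    assume h: "linner N (lcross b2 b3) = 0"
    have "0 - (linner N (lcross b2 b3))^2 = -1"
      by (subst gram) (simp add: assms(3-8) linner_sym[of b2 N] linner_sym[of b3 N] linner_sym[of b3 b2])
    with h show False by simp
  qed
  show ?thesis unfolding born_infeld_soliton_def
  proof
    fix p assume p: "p \<in> U"
    define a where "a = pd True \<psi> p"
    define b where "b = pd False \<psi> p"
    define r where "r = pd True (pd True \<psi>) p"
    define s where "s = pd True (pd False \<psi>) p"
    define t where "t = pd False (pd False \<psi>) p"
    have Xu: "pd True X p = a *\<^sub>R N + b2" using X1[OF p, of True] by (simp add: a_def)
    have Xv: "pd False X p = b *\<^sub>R N + b3" using X1[OF p, of False] by (simp add: b_def)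
    have Xuu: "pd True (pd True X) p = r *\<^sub>R N"
    proof -
      have "pd True (pd True X) p = pd True (\<lambda>q. pd True \<psi> q *\<^sub>R N + b2) p"
        by (rule pd_local[OF assms(1) p]) (simp add: X1)
      also have "\<dots> = r *\<^sub>R N" by (simp add: pd_const[OF dT[OF p]] r_def)
      finally show ?thesis .
    qed
    have Xuv: "pd True (pd False X) p = s *\<^sub>R N"
    proof -
      have "pd True (pd False X) p = pd True (\<lambda>q. pd False \<psi> q *\<^sub>R N + b3) p"
        by (rule pd_local[OF assms(1) p]) (simp add: X1)
      also have "\<dots> = s *\<^sub>R N" by (simp add: pd_const[OF dF[OF p]] s_def)
      finally show ?thesis .
    qed
    have Xvv: "pd False (pd False X) p = t *\<^sub>R N"
    proof -
      have "pd False (pd False X) p = pd False (\<lambda>q. pd False \<psi> q *\<^sub>R N + b3) p"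
        by (rule pd_local[OF assms(1) p]) (simp add: X1)
      also have "\<dots> = t *\<^sub>R N" by (simp add: pd_const[OF dF[OF p]] t_def)
      finally show ?thesis .
    qed
    note LS = linner_add1 linner_add2 linner_scale1 linner_scale2 assms(3-8)
      linner_sym[of b2 N] linner_sym[of b3 N] linner_sym[of b3 b2]
    have E: "fundE X p = a^2 + 1" unfolding fundE_def Xu by (simp add: LS power2_eq_square)
    have F: "fundF X p = a * b" unfolding fundF_def Xu Xv by (simp add: LS)
    have G: "fundG X p = b^2 - 1" unfolding fundG_def Xv by (simp add: LS power2_eq_square)
    have EGF: "fundE X p * fundG X p - (fundF X p)^2 < 0" using tl p unfolding timelike_surface_def by blast
    define m where "m = lcross (pd True X p) (pd False X p)"
    have mm: "linner m m = -(fundE X p * fundG X p - (fundF X p)^2)"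
      unfolding m_def fundE_def fundF_def fundG_def by (rule lcross_norm)
    have mpos: "linner m m > 0" using mm EGF by simp
    define c where "c = 1 / sqrt \<bar>linner m m\<bar>"
    have cpos: "c > 0" using mpos by (simp add: c_def)
    have n: "unit_normal X p = c *\<^sub>R m" by (simp add: unit_normal_def m_def c_def Let_def)
    have nn: "linner (c *\<^sub>R m) (c *\<^sub>R m) = 1"
      using mpos by (simp add: LS c_def real_sqrt_mult[symmetric] power2_eq_square[symmetric])
    have Dm: "linner N m = linner N (lcross b2 b3)"
      unfolding m_def Xu Xv by (rule det_shift)
    define D where "D = linner N (lcross b2 b3)"
    have H: "mean_curvature X p = 0" using mn p unfolding minimal_surface_def by blast
    have H2: "(r * (c * D)) * fundG X p - 2 * (s * (c * D)) * fundF X p + (t * (c * D)) * fundE X p = 0"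
      using H EGF unfolding mean_curvature_def Let_def n nn Xuu Xuv Xvv
      by (simp add: LS Dm D_def, simp only: mult_ac)
    have "c * D \<noteq> 0" using cpos D0 D_def by simp
    then have "r * fundG X p - 2 * s * fundF X p + t * fundE X p = 0"
      using H2 by (metis (no_types, lifting) mult.commute mult.left_commute distrib_left right_diff_distrib mult_eq_0_iff)
    then show "(1 - (pd False \<psi> p)^2) * pd True (pd True \<psi>) p
              + 2 * pd True \<psi> p * pd False \<psi> p * pd True (pd False \<psi>) p
              - (1 + (pd True \<psi> p)^2) * pd False (pd False \<psi>) p = 0"
      unfolding E F G a_def[symmetric] b_def[symmetric] r_def[symmetric] s_def[symmetric] t_def[symmetric]
      by (simp add: algebra_simps)
  qed
qed

end
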